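(* Let $k\ge1$, $r=\sqrt[k]{p}$. In multi-level MS with string-based regular sampling using a sampling factor $v=\Theta(kr)=\Theta(k\sqrt[k]{p})$, the number of strings per PE is in $\mathcal{O}(n/p)$ in each level of the algorithm.
   Context: $p$ PEs hold in total $n$ strings, $\Theta(n/p)$ per PE initially. Multi-level MS (with $p=r^k$): each PE sorts its local strings; then on each level $t=1,\dots,k$ the PEs form $r^{t-1}$ groups of $p'=r^{k+1-t}$ consecutive PEs, each group independently sorting the concatenation $S'$ of its PEs' locally sorted arrays $S_i$: $r-1$ splitters $f_1<\dots<f_{r-1}$ are chosen, bucket $B^j=\bigcup_i\{s\in S_i:f_j<s\le f_{j+1}\}$ ($f_0=-\infty,f_r=\infty$) is assigned to the $j$-th subgroup of $p''=p'/r$ PEs such that each PE of that subgroup receives $|B^j|/p''$ strings, and received sequences are merged. String-based regular sampling with factor $v$: with $\omega=|S'|/(p'(v+1))$ (assumed to be an integer), PE $i$ draws $\lceil|S_i|/\omega\rceil-1$ evenly spaced samples from its sorted local array, the first PEs drawing one extra sample if fewer than $p'(v+1)$ samples result; the samples $V$ are sorted globally and $f_j=V[j|V|/r-1]$.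
   Formalization: The n input strings held by the p PEs are assumed pairwise distinct. The paper assumes this as well. *)

theory Defs
  imports Complex_Main "HOL-Library.Multiset"
begin

text \<open>Strings are elements of an arbitrary linear order (only
comparisons are used by the algorithm).  A group of p' PEs is represented by the
list of the local (sorted) arrays of its PEs, in PE order.\<close>

definition ceil_div :: "nat \<Rightarrow> nat \<Rightarrow> nat" where
  "ceil_div a b = (a + b - 1) div b"

text \<open>omega = |S'| / (p' (v+1)); its integrality is required in ms_group_step.\<close>
definition ms_omega :: "'a list list \<Rightarrow> nat \<Rightarrow> nat" where
  "ms_omega Ss v = sum_list (map length Ss) div (length Ss * (v + 1))"

definition base_count :: "'a list list \<Rightarrow> nat \<Rightarrow> nat \<Rightarrow> nat" where
  "base_count Ss v i = ceil_div (length (Ss ! i)) (ms_omega Ss v) - 1"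

definition even_samples :: "'a list \<Rightarrow> nat \<Rightarrow> 'a list" where
  "even_samples xs c = map (\<lambda>j. xs ! ((j * length xs) div (c + 1))) [1..<c + 1]"

definition ms_samples :: "'a::linorder list list \<Rightarrow> nat \<Rightarrow> 'a list" where
  "ms_samples Ss v =
     (let m = length Ss * (v + 1);
          d = m - (\<Sum>i<length Ss. base_count Ss v i)
      in sort (concat (map (\<lambda>i. even_samples (Ss ! i)
                 (base_count Ss v i + (if i < d then 1 else 0))) [0..<length Ss])))"

definition splitter :: "nat \<Rightarrow> 'a list \<Rightarrow> nat \<Rightarrow> 'a" where
  "splitter r V j = V ! ((j * length V) div r - 1)"

text \<open>Bucket B^j (0 <= j < r), with f_0 = -infinity and f_r = +infinity.\<close>
definition bucket :: "nat \<Rightarrow> nat \<Rightarrow> 'a::linorder list list \<Rightarrow> nat \<Rightarrow> 'a list" where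
  "bucket r v Ss j =
     (let V = ms_samples Ss v in
      concat (map (filter (\<lambda>s. (j = 0 \<or> splitter r V j < s) \<and>
                               (j + 1 = r \<or> s \<le> splitter r V (j + 1)))) Ss))"

definition ms_group_step :: "nat \<Rightarrow> nat \<Rightarrow> 'a::linorder list list \<Rightarrow> 'a list list \<Rightarrow> bool" where
  "ms_group_step r v Ss Ss' \<longleftrightarrow>
     (let p' = length Ss; p'' = p' div r in
      length Ss' = p' \<and>
      (p' * (v + 1)) dvd sum_list (map length Ss) \<and>
      (\<forall>j<r. let B = bucket r v Ss j in
         mset (concat (map (\<lambda>q. Ss' ! (j * p'' + q)) [0..<p''])) = mset B \<and>
         (\<forall>q<p''. sorted (Ss' ! (j * p'' + q)) \<and>
             length (Ss' ! (j * p'' + q)) \<in> {length B div p'', ceil_div (length B) p''})))"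

text \<open>A run of k-level MS on p = r^k PEs.  conf t i is the local array of PE i
after level t (conf 0 i = locally sorted initial array).\<close>
definition ms_run :: "nat \<Rightarrow> nat \<Rightarrow> nat \<Rightarrow> (nat \<Rightarrow> 'a::linorder list) \<Rightarrow>
                      (nat \<Rightarrow> nat \<Rightarrow> 'a list) \<Rightarrow> bool" where
  "ms_run k r v init conf \<longleftrightarrow>
     (\<forall>i<r ^ k. conf 0 i = sort (init i)) \<and>
     (\<forall>t\<in>{1..k}. \<forall>g<r ^ (t - 1).
        ms_group_step r v
          (map (\<lambda>i. conf (t - 1) (g * r ^ (k + 1 - t) + i)) [0..<r ^ (k + 1 - t)])
          (map (\<lambda>i. conf t (g * r ^ (k + 1 - t) + i)) [0..<r ^ (k + 1 - t)]))"

end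

theory Submission
  imports Defs
begin

lemma pos_iter:
  fixes L w c :: nat
  assumes "L \<le> w * (c+1)"
  shows "(a + d) * L div (c+1) \<le> a * L div (c+1) + d * w"
proof (induction d)
  case 0 then show ?case by simp
next
  case (Suc d)
  have "(a + Suc d) * L = (a + d) * L + L" by simp
  also have "\<dots> \<le> (a + d) * L + w * (c+1)" using assms by simp
  finally have "(a + Suc d) * L div (c+1) \<le> ((a + d) * L + w * (c+1)) div (c+1)"
    by (rule div_le_mono)
  also have "\<dots> = (a + d) * L div (c+1) + w" by (metis div_mult_self1 add_gr_0 less_numeral_extra(1) less_not_refl2 add.commute)
  finally show ?case using Suc by simp
qed

lemma filter_samples:
  fixes S :: "'a::linorder list"
  assumes sorted: "sorted S" and Lw: "length S \<le> w * (c+1)"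
    and conv: "\<And>a b z. P a \<Longrightarrow> P b \<Longrightarrow> a \<le> z \<Longrightarrow> z \<le> b \<Longrightarrow> P z"
  shows "length (filter P S) \<le> (length (filter P (even_samples S c)) + 1) * w"
proof -
  define L where "L = length S"
  define pos where "pos m = m * L div (c+1)" for m
  have step: "pos (a + d) \<le> pos a + d * w" for a d
    unfolding pos_def using pos_iter[of L w c a d] Lw L_def by simp
  have mono: "pos a \<le> pos b" if "a \<le> b" for a b
    unfolding pos_def using that by (simp add: div_le_mono)
  have posc: "pos (c+1) = L" unfolding pos_def by (rule nonzero_mult_div_cancel_left) simp
  have pos0: "pos 0 = 0" unfolding pos_def by simp
  define K where "K = {l. l < L \<and> P (S!l)}"
  have lenK: "length (filter P S) = card K"
    unfolding K_def L_def by (rule length_filter_conv_card)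
  define s where "s = length (filter P (even_samples S c))"
  have es_len: "length (even_samples S c) = c" by (simp add: even_samples_def)
  have es_nth: "even_samples S c ! i = S ! pos (i+1)" if "i < c" for i
    using that unfolding even_samples_def pos_def L_def by (simp del: upt_Suc add: add.commute)
  have s_eq: "s = card {i. i < c \<and> P (S ! pos (i+1))}"
    unfolding s_def length_filter_conv_card es_len
    by (rule arg_cong[where f=card]) (auto simp: es_nth)
  show ?thesis
  proof (cases "K = {}")
    case True then show ?thesis using lenK by simp
  next
    case False
    have finK: "finite K" unfolding K_def by simp
    define lo where "lo = Min K"
    define hi where "hi = Max K"
    have loK: "lo \<in> K" unfolding lo_def using finK False by simp
    have hiK: "hi \<in> K" unfolding hi_def using finK False by simp
    have Ksub: "K \<subseteq> {lo..hi}" unfolding lo_def hi_def using finK by auto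
    have cardK: "card K \<le> hi + 1 - lo"
      using card_mono[OF _ Ksub] by simp
    have hiL: "hi < L" and Plo: "P (S!lo)" and Phi: "P (S!hi)" using loK hiK K_def by auto
    have lohi: "lo \<le> hi" using Ksub loK by auto
    define ms where "ms = (LEAST m. m \<le> c+1 \<and> lo < pos m)"
    have ex1: "c+1 \<le> c+1 \<and> lo < pos (c+1)" using posc hiL lohi by simp
    have ms1: "ms \<le> c+1 \<and> lo < pos ms" unfolding ms_def by (rule LeastI[where P="\<lambda>m. m \<le> c+1 \<and> lo < pos m", OF ex1])
    have ms2: "\<not> (m \<le> c+1 \<and> lo < pos m)" if "m < ms" for m
      using not_less_Least[of m "\<lambda>m. m \<le> c+1 \<and> lo < pos m"] that unfolding ms_def by blast
    define mp where "mp = (LEAST m. m \<le> c+1 \<and> hi < pos m)"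
    have ex2: "c+1 \<le> c+1 \<and> hi < pos (c+1)" using posc hiL by simp
    have mp1: "mp \<le> c+1 \<and> hi < pos mp" unfolding mp_def by (rule LeastI[where P="\<lambda>m. m \<le> c+1 \<and> hi < pos m", OF ex2])
    have mp2: "\<not> (m \<le> c+1 \<and> hi < pos m)" if "m < mp" for m
      using not_less_Least[of m "\<lambda>m. m \<le> c+1 \<and> hi < pos m"] that unfolding mp_def by blast
    have ms_ge1: "1 \<le> ms" using ms1 pos0 by (cases ms) auto
    have ms_le_mp: "ms \<le> mp"
      unfolding ms_def using mp1 lohi Least_le[of "\<lambda>m. m \<le> c+1 \<and> lo < pos m" mp] by linarith
    have sub: "(\<lambda>m. m - 1) ` {ms..<mp} \<subseteq> {i. i < c \<and> P (S ! pos (i+1))}"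
    proof
      fix i assume "i \<in> (\<lambda>m. m - 1) ` {ms..<mp}"
      then obtain m where m: "ms \<le> m" "m < mp" "i = m - 1" by auto
      have m1: "1 \<le> m" using m ms_ge1 by simp
      have mc: "m \<le> c" using m mp1 by simp
      have "pos ms \<le> pos m" using mono m by simp
      have "pos m \<le> hi" using mp2[OF m(2)] mc by simp
      have "S!lo \<le> S!(pos m)" using sorted_nth_mono[OF sorted, of lo "pos m"]
        \<open>pos ms \<le> pos m\<close> ms1 \<open>pos m \<le> hi\<close> hiL L_def by simp
      moreover have "S!(pos m) \<le> S!hi" using sorted_nth_mono[OF sorted, of "pos m" hi]
        \<open>pos m \<le> hi\<close> hiL L_def by simp
      ultimately have "P (S ! pos m)" using conv[OF Plo Phi] by blast
      then show "i \<in> {i. i < c \<and> P (S ! pos (i+1))}" using m m1 mc by simp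
    qed
    have inj: "inj_on (\<lambda>m. m - 1) {ms..<mp}" using ms_ge1 by (auto simp: inj_on_def)
    have "mp - ms = card ((\<lambda>m. m - 1) ` {ms..<mp})" using card_image[OF inj] by simp
    also have "\<dots> \<le> s" unfolding s_eq by (rule card_mono[OF _ sub]) simp
    finally have mpms: "mp - ms \<le> s" .
    have "ms - 1 \<le> c + 1" "ms - 1 < ms" using ms1 ms_ge1 by linarith+
    then have pm: "pos (ms - 1) \<le> lo" using ms2[of "ms - 1"] by (simp add: not_less)
    have "pos mp = pos ((ms - 1) + (mp - ms + 1))" using ms_ge1 ms_le_mp by simp
    also have "\<dots> \<le> pos (ms - 1) + (mp - ms + 1) * w" by (rule step)
    also have "\<dots> \<le> lo + (s + 1) * w" using pm mpms by (intro add_mono mult_le_mono1) auto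
    finally have "hi < lo + (s+1) * w" using mp1 by simp
    then show ?thesis using lenK cardK s_def by simp
  qed
qed


lemma samples_distinct:
  fixes S :: "'a list"
  assumes dS: "distinct S" and c: "c \<le> length S \<or> c \<le> 1"
  shows "distinct (even_samples S c)"
proof (cases "c \<le> 1")
  case True
  then have "length (even_samples S c) \<le> 1" by (simp add: even_samples_def)
  then show ?thesis by (cases "even_samples S c") auto
next
  case False
  define L where "L = length S"
  have cL: "c \<le> L" and c2: "2 \<le> c" using False c L_def by auto
  define pos where "pos m = m * L div (c+1)" for m
  have posL: "pos m < L" if "m \<le> c" for m
  proof -
    have "m * L < (c+1) * L" using that cL c2 by (intro mult_strict_right_mono) auto
    then show ?thesis unfolding pos_def by (intro less_mult_imp_div_less) (simp add: mult.commute)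
  qed
  have strict: "pos a < pos b" if "1 \<le> a" "a < b" "b \<le> c" for a b
  proof (cases "c + 1 \<le> L")
    case True
    have "a * L + (c+1) \<le> b * L"
    proof -
      have "a * L + L \<le> b * L" using that
        by (metis Suc_leI add.commute mult_Suc mult_le_mono1)
      then show ?thesis using True by linarith
    qed
    then have "(a * L + (c+1)) div (c+1) \<le> b * L div (c+1)" by (rule div_le_mono)
    moreover have "(a * L + (c+1)) div (c+1) = a * L div (c+1) + 1"
      using div_mult_self2[of "c+1" "a*L" 1] by (simp only: mult_1_right)
    ultimately show ?thesis unfolding pos_def by simp
  next
    case False
    then have Lc: "L = c" using cL by simp
    have up: "pos m < m" if "1 \<le> m" for m
    proof -
      have "m * L < m * (c+1)" using Lc that by simp
      then show ?thesis unfolding pos_def by (intro less_mult_imp_div_less) (simp add: mult.commute)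
    qed
    have lo: "m - 1 \<le> pos m" if m1: "1 \<le> m" and mc: "m \<le> c" for m
    proof -
      obtain m' where m': "m = Suc m'" using m1 by (cases m) auto
      have "m' * (c+1) \<le> m * L" using m' Lc mc by (simp add: algebra_simps)
      then have "m' * (c+1) div (c+1) \<le> m * L div (c+1)" by (rule div_le_mono)
      moreover have "m' * (c+1) div (c+1) = m'" by (rule nonzero_mult_div_cancel_right) simp
      ultimately show ?thesis unfolding pos_def using m' by (simp only:)
    qed
    have "pos a < a" using up that by simp
    also have "a \<le> b - 1" using that by simp
    also have "b - 1 \<le> pos b" using lo that by simp
    finally show ?thesis .
  qed
  have inj: "inj_on (\<lambda>j. S ! pos j) {1..<c+1}"
  proof (rule inj_onI)
    fix a b assume a: "a \<in> {1..<c+1}" and b: "b \<in> {1..<c+1}" and eq: "S ! pos a = S ! pos b"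
    have "pos a = pos b" using nth_eq_iff_index_eq[OF dS, of "pos a" "pos b"] eq posL a b L_def by simp
    then show "a = b" using strict[of a b] strict[of b a] a b
      by (metis atLeastLessThan_iff Suc_eq_plus1 less_Suc_eq_le linorder_neqE_nat less_irrefl)
  qed
  show ?thesis unfolding even_samples_def distinct_map set_upt using inj
    unfolding pos_def L_def by (simp del: upt_Suc)
qed

lemma count_concat_distinct:
  assumes "\<forall>xs\<in>set xss. distinct xs"
  shows "count (mset (concat xss)) y \<le> length xss"
  using assms
proof (induction xss)
  case Nil then show ?case by simp
next
  case (Cons xs xss)
  have "count (mset xs) y \<le> 1" using Cons.prems distinct_count_atmost_1[of xs] by auto
  then show ?case using Cons by simp
qed

lemma V_count:
  fixes V :: "'a::linorder list"
  assumes sV: "sorted V" and r: "1 \<le> r" "j < r" and cnt: "\<forall>y. count (mset V) y \<le> q"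
  shows "length (filter (\<lambda>s. (j = 0 \<or> splitter r V j < s) \<and> (j + 1 = r \<or> s \<le> splitter r V (j + 1))) V)
          \<le> (j+1) * length V div r + 1 - j * length V div r + q"
proof (cases "V = []")
  case True then show ?thesis by simp
next
  case False
  define M where "M = length V"
  have M0: "0 < M" using False M_def by simp
  define I where "I = (\<lambda>s. (j = 0 \<or> splitter r V j < s) \<and> (j + 1 = r \<or> s \<le> splitter r V (j + 1)))"
  define a where "a = j * M div r - 1"
  define b where "b = (j+1) * M div r - 1"
  define y where "y = V ! b"
  have jM: "j * M div r \<le> M"
  proof -
    have "j * M div r \<le> r * M div r" using r by (intro div_le_mono mult_le_mono1) simp
    then show ?thesis using r by simp
  qed
  have j1M: "(j+1) * M div r \<le> M"
  proof -
    have "(j+1) * M div r \<le> r * M div r" using r by (intro div_le_mono mult_le_mono1) simp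
    then show ?thesis using r by simp
  qed
  have aM: "a < M" using jM M0 a_def by simp
  have bM: "b < M" using j1M M0 b_def by simp
  have mono_jj: "j * M div r \<le> (j+1) * M div r" by (intro div_le_mono mult_le_mono1) simp
  have sub: "{i. i < M \<and> I (V ! i)} \<subseteq> {j * M div r..<(j+1) * M div r + 1} \<union> {i. i < M \<and> V ! i = y}"
  proof
    fix i assume i: "i \<in> {i. i < M \<and> I (V ! i)}"
    then have iM: "i < M" and Ii: "I (V ! i)" by auto
    have low: "j * M div r \<le> i"
    proof (cases "j = 0")
      case True then show ?thesis by simp
    next
      case False
      then have "V ! a < V ! i" using Ii unfolding I_def splitter_def a_def M_def by simp
      then have "\<not> i \<le> a" using sorted_nth_mono[OF sV, of i a] aM M_def by auto
      then show ?thesis using a_def by linarith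
    qed
    show "i \<in> {j * M div r..<(j+1) * M div r + 1} \<union> {i. i < M \<and> V ! i = y}"
    proof (cases "j + 1 = r")
      case True
      then have "(j+1) * M div r = M" using r by simp
      then show ?thesis using low iM by simp
    next
      case False
      then have "V ! i \<le> y" using Ii unfolding I_def splitter_def b_def y_def M_def by simp
      show ?thesis
      proof (cases "i \<le> b")
        case True then show ?thesis using low b_def by auto
      next
        case False
        then have "y \<le> V ! i" using sorted_nth_mono[OF sV, of b i] iM M_def y_def by auto
        then show ?thesis using \<open>V ! i \<le> y\<close> iM by auto
      qed
    qed
  qed
  have cy: "card {i. i < M \<and> V ! i = y} = count (mset V) y"
  proof -
    have "card {i. i < M \<and> V ! i = y} = length (filter (\<lambda>z. z = y) V)"
      unfolding length_filter_conv_card M_def ..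
    also have "\<dots> = size (filter_mset (\<lambda>z. z = y) (mset V))"
      by (metis mset_filter size_mset)
    also have "\<dots> = count (mset V) y" by (simp add: filter_eq_replicate_mset)
    finally show ?thesis .
  qed
  have "length (filter I V) = card {i. i < M \<and> I (V ! i)}"
    unfolding length_filter_conv_card M_def ..
  also have "\<dots> \<le> card ({j * M div r..<(j+1) * M div r + 1} \<union> {i. i < M \<and> V ! i = y})"
    by (rule card_mono[OF _ sub]) simp
  also have "\<dots> \<le> card {j * M div r..<(j+1) * M div r + 1} + card {i. i < M \<and> V ! i = y}"
    by (rule card_Un_le)
  also have "\<dots> \<le> (j+1) * M div r + 1 - j * M div r + q" using cy cnt by simp
  finally show ?thesis unfolding I_def M_def .
qed

lemma bucket_sub:
  "mset (concat (map (filter P) xss)) \<subseteq># mset (concat xss)"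
  by (induction xss) (auto intro: subset_mset.add_mono multiset_filter_subset)


lemma div_diff_bound:
  fixes a b r :: nat
  assumes "0 < r"
  shows "real ((a + b) div r) - real (a div r) \<le> real b / real r + 1"
proof -
  have h1: "(a + b) div r * r \<le> a + b" by (rule div_times_less_eq_dividend)
  have h2: "a < (a div r + 1) * r"
    using assms by (metis add.commute div_mult_mod_eq add_less_cancel_left mod_less_divisor mult.commute distrib_left mult_1_right)
  have "real ((a + b) div r) * real r < real b + (real (a div r) + 1) * real r"
  proof -
    have "(a + b) div r * r < b + (a div r + 1) * r" using h1 h2 by linarith
    then have "real ((a + b) div r * r) < real (b + (a div r + 1) * r)" by (simp only: of_nat_less_iff)
    then show ?thesis by (simp add: algebra_simps)
  qed
  then have "real ((a + b) div r) < real b / real r + (real (a div r) + 1)"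
    using assms by (simp add: field_simps)
  then show ?thesis by simp
qed

lemma len_concat_map_nth:
  "length (concat (map f xs)) = (\<Sum>i<length xs. length (f (xs ! i)))"
proof -
  have "length (concat (map f xs)) = sum_list (map (\<lambda>i. length (f (xs ! i))) [0..<length xs])"
    by (subst map_nth[symmetric]) (simp add: length_concat map_map comp_def del: map_nth)
  also have "\<dots> = (\<Sum>i<length xs. length (f (xs ! i)))"
    by (simp add: sum_set_upt_conv_sum_list_nat[symmetric] atLeast0LessThan)
  finally show ?thesis .
qed

lemma len_concat_map_upt:
  "length (concat (map f [0..<p])) = (\<Sum>i<p. length (f i))"
  using len_concat_map_nth[of f "[0..<p]"] by simp

lemma bucket_len_le:
  "length (bucket r v Ss j) \<le> sum_list (map length Ss)"
proof -
  have "mset (bucket r v Ss j) \<subseteq># mset (concat Ss)"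
    unfolding bucket_def Let_def by (rule bucket_sub)
  then have "size (mset (bucket r v Ss j)) \<le> size (mset (concat Ss))" by (rule size_mset_mono)
  then show ?thesis by (simp add: length_concat)
qed

lemma bucket_bound:
  fixes Ss :: "'a::linorder list list"
  assumes p1: "1 \<le> length Ss" and r: "1 \<le> r" "j < r"
   and sd: "\<And>i. i < length Ss \<Longrightarrow> sorted (Ss!i) \<and> distinct (Ss!i)"
   and dv: "(length Ss * (v+1)) dvd sum_list (map length Ss)"
  shows "real (length (bucket r v Ss j)) \<le> real (sum_list (map length Ss)) / r + 4 * real (sum_list (map length Ss)) / (v+1)"
proof -
  define p where "p = length Ss"
  define N where "N = sum_list (map length Ss)"
  show ?thesis
  proof (cases "N = 0")
    case True
    have "length (bucket r v Ss j) = 0" using bucket_len_le[of r v Ss j] True N_def by linarith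
    then show ?thesis unfolding N_def[symmetric] True by simp
  next
    case False
    define w where "w = ms_omega Ss v"
    have w_eq: "w = N div (p * (v+1))" unfolding w_def ms_omega_def N_def p_def ..
    have Nw: "N = p * (v+1) * w" using dv unfolding w_eq N_def p_def by simp
    have w1: "1 \<le> w" using Nw False by (cases w) auto
    define d where "d = p * (v+1) - (\<Sum>i<p. base_count Ss v i)"
    define c where "c i = base_count Ss v i + (if i < d then 1 else 0)" for i
    define smp where "smp i = even_samples (Ss!i) (c i)" for i
    define V where "V = ms_samples Ss v"
    have V_eq: "V = sort (concat (map smp [0..<p]))"
      unfolding V_def ms_samples_def Let_def smp_def c_def d_def p_def by simp
    define X where "X i = (length (Ss!i) + w - 1) div w" for i
    have base_X: "base_count Ss v i = X i - 1" for i
      unfolding base_count_def ceil_div_def X_def w_def ..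
    have wX1: "length (Ss!i) \<le> w * X i" for i
    proof -
      have "length (Ss!i) + w - 1 < w * (X i + 1)"
      proof -
        have e: "length (Ss!i) + w - 1 = w * X i + (length (Ss!i) + w - 1) mod w"
          unfolding X_def by (simp add: mult.commute)
        have "(length (Ss!i) + w - 1) mod w < w" using w1 by simp
        then show ?thesis using e by (simp add: algebra_simps)
      qed
      then show ?thesis using w1 by (simp add: algebra_simps)
    qed
    have wX2: "w * X i \<le> length (Ss!i) + w - 1" for i
      unfolding X_def by (simp add: mult.commute div_times_less_eq_dividend)
    have Lc: "length (Ss!i) \<le> w * (c i + 1)" for i
    proof -
      have "X i \<le> c i + 1" unfolding c_def base_X by simp
      then have "w * X i \<le> w * (c i + 1)" by (rule mult_le_mono2)
      then show ?thesis using wX1[of i] by linarith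
    qed
    have base_w: "base_count Ss v i * w \<le> length (Ss!i)" for i
    proof -
      have "w * (X i - 1) = w * X i - w" by (simp add: right_diff_distrib')
      then show ?thesis unfolding base_X using wX2[of i] w1 by (simp add: mult.commute)
    qed
    have c_le: "c i \<le> length (Ss!i) \<or> c i \<le> 1" for i
    proof (cases "length (Ss!i) = 0")
      case True
      have "X i = 0" unfolding X_def True using w1 by simp
      then show ?thesis unfolding c_def base_X by simp
    next
      case False
      have "X i \<le> length (Ss!i)"
      proof (rule ccontr)
        assume "\<not> X i \<le> length (Ss!i)"
        then have "length (Ss!i) + 1 \<le> X i" by simp
        then have "w * (length (Ss!i) + 1) \<le> w * X i" by (rule mult_le_mono2)
        then have "w + w * length (Ss!i) \<le> w * X i" by (simp add: algebra_simps)
        moreover have "length (Ss!i) \<le> w * length (Ss!i)" using w1 by simp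
        ultimately show False using wX2[of i] w1 by linarith
      qed
      then show ?thesis unfolding c_def base_X using False by (cases "X i = 0") auto
    qed
    have sum_base: "(\<Sum>i<p. base_count Ss v i) \<le> p * (v+1)"
    proof -
      have "(\<Sum>i<p. base_count Ss v i) * w = (\<Sum>i<p. base_count Ss v i * w)"
        by (simp add: sum_distrib_right)
      also have "\<dots> \<le> (\<Sum>i<p. length (Ss!i))" by (intro sum_mono base_w)
      also have "\<dots> = N" unfolding N_def p_def
        using len_concat_map_nth[of "\<lambda>x. x" Ss] by (simp add: length_concat)
      also have "\<dots> = p * (v+1) * w" by (rule Nw)
      finally show ?thesis using w1 by simp
    qed
    define M where "M = length V"
    have M_eq: "M = (\<Sum>i<p. c i)"
      unfolding M_def V_eq length_sort len_concat_map_upt smp_def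
      by (simp add: even_samples_def del: upt_Suc)
    have Mle: "M \<le> p * (v+1)"
    proof -
      have "(\<Sum>i<p. c i) = (\<Sum>i<p. base_count Ss v i) + (\<Sum>i<p. (if i < d then 1 else 0))"
        unfolding c_def by (simp add: sum.distrib)
      also have "(\<Sum>i<p. (if i < d then 1 else 0::nat)) = card {i. i < p \<and> i < d}"
        by (simp add: sum.If_cases Int_def)
      also have "card {i. i < p \<and> i < d} \<le> card {..<d}" by (rule card_mono) auto
      finally show ?thesis unfolding M_eq d_def using sum_base by simp
    qed
    define I where "I = (\<lambda>s. (j = 0 \<or> splitter r V j < s) \<and> (j + 1 = r \<or> s \<le> splitter r V (j + 1)))"
    have B_eq: "bucket r v Ss j = concat (map (filter I) Ss)"
      unfolding bucket_def Let_def I_def V_def ..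
    have conv: "I z" if "I a" "I b" "a \<le> z" "z \<le> b" for a b z
      using that unfolding I_def by auto
    have step1: "length (bucket r v Ss j) \<le> (\<Sum>i<p. (length (filter I (smp i)) + 1) * w)"
      unfolding B_eq len_concat_map_nth p_def[symmetric]
    proof (rule sum_mono)
      fix i assume "i \<in> {..<p}"
      then have so: "sorted (Ss!i)" using sd p_def by auto
      show "length (filter I (Ss ! i)) \<le> (length (filter I (smp i)) + 1) * w"
        unfolding smp_def by (rule filter_samples[OF so Lc[of i]]) (rule conv)
    qed
    have step2: "(\<Sum>i<p. length (filter I (smp i))) = length (filter I V)"
    proof -
      have "(\<Sum>i<p. length (filter I (smp i))) = length (concat (map (\<lambda>i. filter I (smp i)) [0..<p]))"
        by (rule len_concat_map_upt[symmetric])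
      also have "\<dots> = length (filter I (concat (map smp [0..<p])))"
        by (simp add: filter_concat map_map comp_def)
      also have "\<dots> = length (filter I V)"
        unfolding V_eq by (rule mset_eq_length) simp
      finally show ?thesis .
    qed
    have cnt: "\<forall>y. count (mset V) y \<le> p"
    proof
      fix y
      have "count (mset V) y = count (mset (concat (map smp [0..<p]))) y" unfolding V_eq by simp
      also have "\<dots> \<le> length (map smp [0..<p])"
      proof (rule count_concat_distinct, rule ballI)
        fix xs assume "xs \<in> set (map smp [0..<p])"
        then obtain i where i: "i < p" "xs = smp i" by auto
        show "distinct xs" unfolding i smp_def
          using samples_distinct[of "Ss!i" "c i"] sd[of i] c_le[of i] i p_def by simp
      qed
      finally show "count (mset V) y \<le> p" by simp
    qed
    have sV: "sorted V" unfolding V_eq by simp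
    have step3: "length (filter I V) \<le> (j+1) * M div r + 1 - j * M div r + p"
      unfolding I_def M_def by (rule V_count[OF sV r cnt])
    have mono_jj: "j * M div r \<le> (j+1) * M div r" by (intro div_le_mono mult_le_mono1) simp
    have Dle: "real ((j+1) * M div r) - real (j * M div r) \<le> real M / real r + 1"
      using div_diff_bound[of r "j*M" M] r by (simp add: algebra_simps)
    have "length (bucket r v Ss j) \<le> w * (length (filter I V) + p)"
    proof -
      have "(\<Sum>i<p. (length (filter I (smp i)) + 1) * w) = w * (\<Sum>i<p. length (filter I (smp i))) + p * w"
        by (simp add: sum.distrib sum_distrib_right sum_distrib_left algebra_simps)
      then show ?thesis using step1 step2 by (simp add: algebra_simps)
    qed
    also have "\<dots> \<le> w * ((j+1) * M div r + 1 - j * M div r + p + p)"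
      using step3 by simp
    finally have nat_b: "length (bucket r v Ss j) \<le> w * ((j+1) * M div r + 1 - j * M div r + p + p)" .
    have "real (length (bucket r v Ss j)) \<le> real w * (real ((j+1) * M div r) + 1 - real (j * M div r) + p + p)"
    proof -
      have le1: "j * M div r \<le> (j+1) * M div r + 1" using mono_jj by linarith
      have "real (length (bucket r v Ss j)) \<le> real (w * ((j+1) * M div r + 1 - j * M div r + p + p))"
        using nat_b by (simp only: of_nat_le_iff)
      also have "\<dots> = real w * (real ((j+1) * M div r + 1 - j * M div r) + p + p)" by simp
      also have "real ((j+1) * M div r + 1 - j * M div r) = real ((j+1) * M div r) + 1 - real (j * M div r)"
        using le1 by (simp only: of_nat_diff of_nat_add of_nat_1)
      finally show ?thesis by simp
    qed
    also have "\<dots> \<le> real w * (real M / real r + 2 + 2 * p)"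
      using Dle by (intro mult_left_mono) auto
    also have "\<dots> \<le> real w * (real p * (v+1) / real r + 4 * p)"
    proof -
      have a: "real M / real r \<le> real p * (v+1) / real r"
      proof -
        have "real M \<le> real (p * (v+1))" using Mle by (simp only: of_nat_le_iff)
        then show ?thesis by (intro divide_right_mono) (simp_all add: algebra_simps)
      qed
      have b: "2 + 2 * real p \<le> 4 * real p" using p1 p_def by simp
      have "real M / real r + 2 + 2 * p \<le> real p * (v+1) / real r + 4 * p" using a b by linarith
      then show ?thesis by (intro mult_left_mono) simp_all
    qed
    also have "\<dots> = real N / r + 4 * real N / (v+1)"
      unfolding Nw by (simp add: field_simps)
    finally show ?thesis unfolding N_def .
  qed
qed


lemma distinct_iff_count_le1: "distinct xs \<longleftrightarrow> (\<forall>a. count (mset xs) a \<le> 1)"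
proof (induction xs)
  case Nil then show ?case by simp
next
  case (Cons x xs)
  show ?case
  proof
    assume "distinct (x # xs)"
    then show "\<forall>a. count (mset (x # xs)) a \<le> 1" using Cons by (auto simp: count_eq_zero_iff)
  next
    assume h: "\<forall>a. count (mset (x # xs)) a \<le> 1"
    then have "\<forall>a. count (mset xs) a \<le> 1" by (metis add_leE count_add_mset mset.simps(2) Suc_eq_plus1)
    moreover have "count (mset xs) x = 0" using h[rule_format, of x] by simp
    ultimately show "distinct (x # xs)" using Cons by (simp add: count_eq_zero_iff)
  qed
qed

lemma distinct_sub:
  assumes "mset xs \<subseteq># mset ys" "distinct ys" shows "distinct xs"
  using assms unfolding distinct_iff_count_le1
  by (meson le_trans mset_subset_eq_count)

lemma ceil_div_bound:
  assumes "0 < b" shows "real (ceil_div a b) \<le> real a / real b + 1"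
proof -
  have "ceil_div a b * b \<le> a + b - 1" unfolding ceil_div_def by (rule div_times_less_eq_dividend)
  then have "real (ceil_div a b) * real b \<le> real a + real b"
    by (metis (mono_tags, opaque_lifting) add_leE diff_le_self le_trans of_nat_add of_nat_le_iff of_nat_mult)
  then show ?thesis using assms by (simp add: field_simps)
qed

lemma E_bound:
  fixes x :: real and k t :: nat
  assumes "0 \<le> x" "1 \<le> k" "t \<le> k"
  shows "(1 + x / k) ^ t \<le> exp x"
proof -
  have "(1 + x / k) ^ t \<le> (1 + x / k) ^ k"
    using assms by (intro power_increasing) auto
  also have "\<dots> \<le> exp (x / k) ^ k"
    using assms by (intro power_mono) auto
  also have "\<dots> = exp x" using assms by (simp add: exp_of_nat_mult[symmetric])
  finally show ?thesis .
qed


theorem theorem3: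
  fixes c1 c2 d1 d2 :: real
  assumes "0 < c1" and "c1 \<le> c2" and "0 < d1" and "d1 \<le> d2"
  shows "\<exists>C::real. \<forall>(k::nat) (r::nat) (v::nat) (n::nat)
            (init :: nat \<Rightarrow> 'a::linorder list) (conf :: nat \<Rightarrow> nat \<Rightarrow> 'a list).
     1 \<le> k \<longrightarrow> 1 \<le> r \<longrightarrow>
     n = (\<Sum>i<r ^ k. length (init i)) \<longrightarrow>
     (\<forall>i<r ^ k. c1 * real n / real (r ^ k) \<le> real (length (init i)) \<and>
                real (length (init i)) \<le> c2 * real n / real (r ^ k)) \<longrightarrow>
     distinct (concat (map init [0..<r ^ k])) \<longrightarrow>
     d1 * real k * real r \<le> real v \<longrightarrow> real v \<le> d2 * real k * real r \<longrightarrow>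
     ms_run k r v init conf \<longrightarrow>
     (\<forall>t\<le>k. \<forall>i<r ^ k. real (length (conf t i)) \<le> C * real n / real (r ^ k))"
proof -
  have c1: "0 < c1" and c2: "0 < c2" and d1: "0 < d1" using assms by auto
  define C where "C = c2 + exp (4 / d1) + 1"
  show ?thesis
  proof (intro exI[of _ C] allI impI)
    fix k r v n :: nat and init :: "nat \<Rightarrow> 'a list" and conf :: "nat \<Rightarrow> nat \<Rightarrow> 'a list" and tt ii :: nat
    assume k1: "1 \<le> k" and r1: "1 \<le> r" and n_def: "n = (\<Sum>i<r ^ k. length (init i))"
      and bal: "\<forall>i<r ^ k. c1 * real n / real (r ^ k) \<le> real (length (init i)) \<and>
                real (length (init i)) \<le> c2 * real n / real (r ^ k)"
      and dist: "distinct (concat (map init [0..<r ^ k]))"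
      and v1: "d1 * real k * real r \<le> real v"
      and run: "ms_run k r v init conf"
      and tt: "tt \<le> k" and ii: "ii < r ^ k"
    have rpos: "0 < r" using r1 by simp
    define P where "P t = r ^ (k - t)" for t
    define grp where "grp t g = map (\<lambda>i. conf t (g * P t + i)) [0..<P t]" for t g
    define G where "G t g = concat (grp t g)" for t g
    define E where "E = 1 + (4 / d1) / real k"
    have Ppos: "0 < P t" for t unfolding P_def using rpos by simp
    have Pk: "r ^ t * P t = r ^ k" if "t \<le> k" for t
      unfolding P_def using that by (simp add: power_add[symmetric])
    have PSuc: "P t = r * P (Suc t)" if "t < k" for t
    proof -
      have "k - t = Suc (k - Suc t)" using that by simp
      then show ?thesis unfolding P_def by simp
    qed
    have run0: "\<forall>i<r ^ k. conf 0 i = sort (init i)" using run unfolding ms_run_def by blast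
    have runS: "\<forall>t\<in>{1..k}. \<forall>g<r ^ (t - 1).
        ms_group_step r v
          (map (\<lambda>i. conf (t - 1) (g * r ^ (k + 1 - t) + i)) [0..<r ^ (k + 1 - t)])
          (map (\<lambda>i. conf t (g * r ^ (k + 1 - t) + i)) [0..<r ^ (k + 1 - t)])"
      using run unfolding ms_run_def by blast
    have idx_lt: "g * P t + i < r ^ k" if "g < r ^ t" "i < P t" "t \<le> k" for g i t
    proof -
      have "g * P t + i < (g + 1) * P t" using that by simp
      also have "\<dots> \<le> r ^ t * P t" using that by (intro mult_le_mono1) simp
      finally show ?thesis using Pk[OF that(3)] by simp
    qed
    have SF: "(length (grp t g) * (v+1)) dvd sum_list (map length (grp t g)) \<and>
       mset (G (Suc t) (g*r+j)) = mset (bucket r v (grp t g) j) \<and>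
       (\<forall>q<P (Suc t). sorted (conf (Suc t) ((g*r+j) * P (Suc t) + q)) \<and>
          length (conf (Suc t) ((g*r+j) * P (Suc t) + q)) \<in>
            {length (bucket r v (grp t g) j) div P (Suc t), ceil_div (length (bucket r v (grp t g) j)) (P (Suc t))})"
      if t: "t < k" and g: "g < r ^ t" and j: "j < r" for t g j
    proof -
      have t1: "Suc t \<in> {1..k}" using t by simp
      have g1: "g < r ^ (Suc t - 1)" using g by simp
      have kk: "k + 1 - Suc t = k - t" by simp
      define Ss' where "Ss' = map (\<lambda>i. conf (Suc t) (g * P t + i)) [0..<P t]"
      have st: "ms_group_step r v (grp t g) Ss'"
        using runS[rule_format, OF t1 g1] unfolding kk grp_def Ss'_def P_def by simp
      have lenS: "length (grp t g) = P t" by (simp add: grp_def)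
      have divr: "P t div r = P (Suc t)" using PSuc[OF t] rpos by simp
      have A: "(P t * (v+1)) dvd sum_list (map length (grp t g))"
        using st unfolding ms_group_step_def Let_def lenS by blast
      have B: "mset (concat (map (\<lambda>q. Ss' ! (j * P (Suc t) + q)) [0..<P (Suc t)])) = mset (bucket r v (grp t g) j) \<and>
         (\<forall>q<P (Suc t). sorted (Ss' ! (j * P (Suc t) + q)) \<and>
             length (Ss' ! (j * P (Suc t) + q)) \<in> {length (bucket r v (grp t g) j) div P (Suc t), ceil_div (length (bucket r v (grp t g) j)) (P (Suc t))})"
        using st j unfolding ms_group_step_def Let_def lenS divr by blast
      have idx: "Ss' ! (j * P (Suc t) + q) = conf (Suc t) ((g*r+j) * P (Suc t) + q)" if q: "q < P (Suc t)" for q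
      proof -
        have "j * P (Suc t) + q < (j + 1) * P (Suc t)" using q by simp
        also have "\<dots> \<le> r * P (Suc t)" using j by (intro mult_le_mono1) simp
        finally have lt: "j * P (Suc t) + q < P t" using PSuc[OF t] by simp
        have "Ss' ! (j * P (Suc t) + q) = conf (Suc t) (g * P t + (j * P (Suc t) + q))"
          unfolding Ss'_def using lt by simp
        also have "g * P t + (j * P (Suc t) + q) = (g*r+j) * P (Suc t) + q"
          using PSuc[OF t] by (simp add: algebra_simps)
        finally show ?thesis .
      qed
      have mapeq: "map (\<lambda>q. Ss' ! (j * P (Suc t) + q)) [0..<P (Suc t)] = grp (Suc t) (g*r+j)"
        unfolding grp_def by (rule map_cong) (auto simp: idx)
      show ?thesis using A B idx mapeq lenS unfolding G_def by auto
    qed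
    have INV: "(\<forall>i<r ^ k. sorted (conf t i)) \<and>
       (\<forall>g<r ^ t. distinct (G t g) \<and> real (length (G t g)) \<le> real n / real (r ^ t) * E ^ t)"
      if "t \<le> k" for t
      using that
    proof (induction t)
      case 0
      have s0: "\<forall>i<r ^ k. sorted (conf 0 i)" using run0 by simp
      have G0: "G 0 0 = concat (map (\<lambda>i. sort (init i)) [0..<r ^ k])"
        unfolding G_def grp_def P_def using run0 by (simp, intro arg_cong[where f=concat] map_cong) auto
      have m0: "mset (G 0 0) = mset (concat (map init [0..<r ^ k]))"
        unfolding G0 by (simp add: mset_concat comp_def)
      have d0: "distinct (G 0 0)" using m0 dist mset_eq_imp_distinct_iff by blast
      have l0: "length (G 0 0) = n"
      proof -
        have "length (G 0 0) = length (concat (map init [0..<r ^ k]))" using m0 by (rule mset_eq_length)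
        also have "\<dots> = n" unfolding len_concat_map_upt n_def ..
        finally show ?thesis .
      qed
      show ?case using s0 d0 l0 by simp
    next
      case (Suc t)
      then have t: "t < k" by simp
      have IH: "(\<forall>i<r ^ k. sorted (conf t i))"
        "\<And>g. g < r ^ t \<Longrightarrow> distinct (G t g) \<and> real (length (G t g)) \<le> real n / real (r ^ t) * E ^ t"
        using Suc t by auto
      have dec: "\<exists>g j. g < r ^ t \<and> j < r \<and> g' = g * r + j" if "g' < r ^ Suc t" for g'
      proof (intro exI conjI)
        show "g' div r < r ^ t" using that rpos by (simp add: less_mult_imp_div_less mult.commute)
        show "g' mod r < r" using rpos by simp
        show "g' = g' div r * r + g' mod r" by simp
      qed
      have sorted1: "\<forall>i<r ^ k. sorted (conf (Suc t) i)"
      proof (intro allI impI)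
        fix i assume i: "i < r ^ k"
        define g' where "g' = i div P (Suc t)"
        define q where "q = i mod P (Suc t)"
        have "i < r ^ Suc t * P (Suc t)" using Pk[of "Suc t"] t i by simp
        then have g': "g' < r ^ Suc t" unfolding g'_def by (simp add: less_mult_imp_div_less)
        obtain g j where gj: "g < r ^ t" "j < r" "g' = g * r + j" using dec[OF g'] by blast
        have q: "q < P (Suc t)" unfolding q_def using Ppos by simp
        have "i = g' * P (Suc t) + q" unfolding g'_def q_def by simp
        then show "sorted (conf (Suc t) i)" using SF[OF t gj(1,2)] q gj(3) by simp
      qed
      have grp1: "\<forall>g'<r ^ Suc t. distinct (G (Suc t) g') \<and>
          real (length (G (Suc t) g')) \<le> real n / real (r ^ Suc t) * E ^ Suc t"
      proof (intro allI impI)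
        fix g' assume g': "g' < r ^ Suc t"
        obtain g j where gj: "g < r ^ t" "j < r" "g' = g * r + j" using dec[OF g'] by blast
        note sf = SF[OF t gj(1,2)]
        have msub: "mset (bucket r v (grp t g) j) \<subseteq># mset (G t g)"
          unfolding bucket_def Let_def G_def by (rule bucket_sub)
        have dG: "distinct (G t g)" using IH(2)[OF gj(1)] by blast
        have dist1: "distinct (G (Suc t) g')"
          using distinct_sub[OF _ dG] msub sf gj(3) by metis
        have len_eq: "length (G (Suc t) g') = length (bucket r v (grp t g) j)"
          using sf gj(3) mset_eq_length by metis
        have lg: "length (grp t g) = P t" by (simp add: grp_def)
        have sd: "sorted (grp t g ! i) \<and> distinct (grp t g ! i)" if "i < length (grp t g)" for i
        proof
          have i: "i < P t" using that lg by simp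
          have nth: "grp t g ! i = conf t (g * P t + i)" unfolding grp_def using i by simp
          show "sorted (grp t g ! i)" using nth IH(1) idx_lt[OF gj(1) i] t by simp
          have "grp t g ! i \<in> set (grp t g)" using that by simp
          then show "distinct (grp t g ! i)" using dG unfolding G_def distinct_concat_iff by blast
        qed
        have lenG: "sum_list (map length (grp t g)) = length (G t g)"
          unfolding G_def by (simp add: length_concat)
        have bb: "real (length (bucket r v (grp t g) j)) \<le>
            real (length (G t g)) / r + 4 * real (length (G t g)) / (v+1)"
          using bucket_bound[of "grp t g" r j v, OF _ r1 gj(2) sd] lg Ppos[of t] sf lenG by simp
        define N where "N = real (length (G t g))"
        have N0: "0 \<le> N" unfolding N_def by simp
        have "4 * N / (v+1) \<le> N / r * ((4 / d1) / real k)"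
        proof -
          have pos: "0 < d1 * real k * real r" using d1 k1 r1 by simp
          have "4 * N / (v+1) \<le> 4 * N / (d1 * real k * real r)"
            using v1 pos N0 by (intro divide_left_mono) auto
          also have "\<dots> = N / r * ((4 / d1) / real k)" by (simp add: field_simps)
          finally show ?thesis .
        qed
        then have "real (length (G (Suc t) g')) \<le> N / r * E"
          using bb len_eq unfolding E_def N_def by (simp add: algebra_simps)
        also have "\<dots> \<le> (real n / real (r ^ t) * E ^ t) / r * E"
          using IH(2)[OF gj(1)] r1 unfolding E_def N_def
          by (intro mult_right_mono divide_right_mono) (auto intro!: add_nonneg_nonneg divide_nonneg_nonneg simp: d1 less_imp_le)
        also have "\<dots> = real n / real (r ^ Suc t) * E ^ Suc t" by (simp add: field_simps)
        finally show "distinct (G (Suc t) g') \<and>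
          real (length (G (Suc t) g')) \<le> real n / real (r ^ Suc t) * E ^ Suc t" using dist1 by simp
      qed
      show ?case using sorted1 grp1 by simp
    qed
    have Ebound: "E ^ t \<le> exp (4 / d1)" if "t \<le> k" for t
      unfolding E_def using E_bound[of "4/d1" k t] d1 k1 that by simp
    have E0: "0 \<le> E" unfolding E_def using d1 by simp
    have npos: "real (r ^ k) \<le> real n" if "0 < n"
    proof -
      have "1 \<le> length (init i)" if i: "i < r ^ k" for i
      proof -
        have "0 < c1 * real n / real (r ^ k)" using c1 \<open>0 < n\<close> rpos by simp
        then have "0 < real (length (init i))" using bal i by (meson less_le_trans)
        then show ?thesis by (simp add: Suc_le_eq)
      qed
      then have "(\<Sum>i<r ^ k. 1) \<le> (\<Sum>i<r ^ k. length (init i))" by (intro sum_mono) simp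
      then have "r ^ k \<le> n" unfolding n_def by simp
      then show ?thesis by (simp only: of_nat_le_iff)
    qed
    have rk: "0 < real (r ^ k)" using rpos by simp
    show "real (length (conf tt ii)) \<le> C * real n / real (r ^ k)"
    proof (cases tt)
      case 0
      have "real (length (conf tt ii)) = real (length (init ii))" using run0 ii 0 by simp
      also have "\<dots> \<le> c2 * real n / real (r ^ k)" using bal ii by simp
      also have "\<dots> \<le> C * real n / real (r ^ k)" unfolding C_def using rk
        by (intro divide_right_mono mult_right_mono) auto
      finally show ?thesis .
    next
      case (Suc t)
      have t: "t < k" using tt Suc by simp
      define g' where "g' = ii div P (Suc t)"
      define q where "q = ii mod P (Suc t)"
      have "ii < r ^ Suc t * P (Suc t)" using Pk[of "Suc t"] t ii by simp
      then have g': "g' < r ^ Suc t" unfolding g'_def by (simp add: less_mult_imp_div_less)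
      define g where "g = g' div r"
      define j where "j = g' mod r"
      have gj: "g < r ^ t" "j < r" "g' = g * r + j"
        unfolding g_def j_def using g' rpos by (simp_all add: less_mult_imp_div_less mult.commute)
      have q: "q < P (Suc t)" unfolding q_def using Ppos by simp
      have iieq: "ii = (g * r + j) * P (Suc t) + q" unfolding q_def using gj(3) g'_def
        by (metis div_mult_mod_eq)
      note sf = SF[OF t gj(1,2)]
      define L where "L = length (bucket r v (grp t g) j)"
      have lenc: "length (conf tt ii) \<in> {L div P (Suc t), ceil_div L (P (Suc t))}"
        using sf q unfolding iieq L_def Suc by blast
      have Lle: "length (conf tt ii) \<le> ceil_div L (P (Suc t))"
      proof -
        have "L div P (Suc t) \<le> ceil_div L (P (Suc t))" unfolding ceil_div_def using Ppos[of "Suc t"] by (intro div_le_mono) simp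
        then show ?thesis using lenc by auto
      qed
      have LG: "L = length (G (Suc t) g')" unfolding L_def using sf gj(3) mset_eq_length by metis
      have Lb: "real L \<le> real n / real (r ^ Suc t) * E ^ Suc t"
        using INV[of "Suc t"] t g' LG by simp
      show ?thesis
      proof (cases "n = 0")
        case True
        then have "L = 0" using Lb by simp
        then have "ceil_div L (P (Suc t)) = 0" unfolding ceil_div_def using Ppos[of "Suc t"] by simp
        then show ?thesis using Lle True by simp
      next
        case False
        have "real (length (conf tt ii)) \<le> real L / real (P (Suc t)) + 1"
          using Lle ceil_div_bound[OF Ppos, of L "Suc t"] by linarith
        also have "real L / real (P (Suc t)) \<le> real n / real (r ^ Suc t) * E ^ Suc t / real (P (Suc t))"
          using Lb Ppos by (intro divide_right_mono) auto
        also have "\<dots> = real n * E ^ Suc t / real (r ^ k)"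
          using Pk[of "Suc t"] t by (simp add: field_simps flip: of_nat_mult)
        also have "\<dots> \<le> real n * exp (4 / d1) / real (r ^ k)"
          using Ebound[of "Suc t"] t rk by (intro divide_right_mono mult_left_mono) auto
        also have "1 \<le> real n / real (r ^ k)" using npos False rk by simp
        finally have "real (length (conf tt ii)) \<le> real n * exp (4 / d1) / real (r ^ k) + real n / real (r ^ k)"
          by simp
        also have "\<dots> \<le> C * real n / real (r ^ k)"
          unfolding C_def using rk c2 by (simp add: field_simps)
        finally show ?thesis .
      qed
    qed
  qed
qed

end
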